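(* Let $p$ be a prime and let $A\subseteq\mathbb{Z}_p^2$ with $|A|=p-1+\mathrm{Ol}(\mathbb{Z}_p)$. Let $U\le\mathbb{Z}_p^2$ be a subgroup with $U\cong\mathbb{Z}_p$, let $B\subseteq A$, let $\pi:\mathbb{Z}_p^2\to\mathbb{Z}_p$ be a surjective homomorphism with kernel $U$, and let $x_1,\dots,x_p$ be representatives of the cosets of $U$ in $\mathbb{Z}_p^2$. For $x\in\mathbb{Z}_p^2$ and a set $C$ write $N(x,U,C)=|C\cap(x+U)|$. Suppose that every element of $\mathbb{Z}_p$ is the sum of some (possibly empty) sub-multiset of the multiset $\pi(B)=\{\pi(b):b\in B\}$, and that \[ \sum_{i=1}^{p}\left\lfloor \frac{N(x_i,U,A\setminus B)}{2}\right\rfloor\left\lceil \frac{N(x_i,U,A\setminus B)}{2}\right\rceil\geq p+1. \] Then $A$ contains a non-empty subset whose sum is $0$.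
   Context: $\mathrm{Ol}(\mathbb{Z}_p)$ denotes the smallest integer $k$ such that every set of $k$ distinct elements of $\mathbb{Z}_p$ contains a non-empty subset with sum $0$. *)

theory Defs
  imports Main "HOL-Computational_Algebra.Primes"
begin

text \<open>Z_p is modelled by the integers {0..<p} with addition mod p;
  Z_p^2 by pairs of such integers with componentwise addition mod p.\<close>

definition Zp :: "int \<Rightarrow> int set" where
  "Zp p = {0..<p}"

definition Zp2 :: "int \<Rightarrow> (int \<times> int) set" where
  "Zp2 p = Zp p \<times> Zp p"

definition addp :: "int \<Rightarrow> int \<Rightarrow> int \<Rightarrow> int" where
  "addp p a b = (a + b) mod p"

definition add2 :: "int \<Rightarrow> int \<times> int \<Rightarrow> int \<times> int \<Rightarrow> int \<times> int" where
  "add2 p x y = ((fst x + fst y) mod p, (snd x + snd y) mod p)"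

definition neg2 :: "int \<Rightarrow> int \<times> int \<Rightarrow> int \<times> int" where
  "neg2 p x = ((- fst x) mod p, (- snd x) mod p)"

definition sum2 :: "int \<Rightarrow> (int \<times> int) set \<Rightarrow> int \<times> int" where
  "sum2 p T = ((\<Sum>t\<in>T. fst t) mod p, (\<Sum>t\<in>T. snd t) mod p)"

definition Ol :: "int \<Rightarrow> nat" where
  "Ol p = (LEAST k. \<forall>S \<subseteq> Zp p. card S = k \<longrightarrow>
              (\<exists>T \<subseteq> S. T \<noteq> {} \<and> (\<Sum>T) mod p = 0))"

definition is_subgroup2 :: "int \<Rightarrow> (int \<times> int) set \<Rightarrow> bool" where
  "is_subgroup2 p U \<longleftrightarrow> U \<subseteq> Zp2 p \<and> (0, 0) \<in> U \<and>
     (\<forall>x\<in>U. \<forall>y\<in>U. add2 p x y \<in> U) \<and> (\<forall>x\<in>U. neg2 p x \<in> U)"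

definition iso_to_Zp :: "int \<Rightarrow> (int \<times> int) set \<Rightarrow> bool" where
  "iso_to_Zp p U \<longleftrightarrow> (\<exists>\<phi>. bij_betw \<phi> (Zp p) U \<and>
     (\<forall>a\<in>Zp p. \<forall>b\<in>Zp p. \<phi> (addp p a b) = add2 p (\<phi> a) (\<phi> b)))"

definition coset2 :: "int \<Rightarrow> int \<times> int \<Rightarrow> (int \<times> int) set \<Rightarrow> (int \<times> int) set" where
  "coset2 p x U = add2 p x ` U"

definition N :: "int \<Rightarrow> int \<times> int \<Rightarrow> (int \<times> int) set \<Rightarrow> (int \<times> int) set \<Rightarrow> nat" where
  "N p x U C = card (C \<inter> coset2 p x U)"

end

theory Submission
  imports Defs "HOL-Computational_Algebra.Polynomial" "HOL-Library.FuncSet"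
    "HOL-Library.Product_Lexorder" "HOL-Number_Theory.Cong"
begin


definition wt :: "rat set \<Rightarrow> rat \<Rightarrow> rat" where
  "wt S t = (\<Prod>b\<in>S-{t}. t - b)"

lemma wt_nz: "finite S \<Longrightarrow> wt S t \<noteq> 0"
  unfolding wt_def by (auto simp: prod_zero_iff)

lemma lagrange_sum:
  fixes S :: "rat set"
  assumes fin: "finite S" and d: "d < card S"
  shows "(\<Sum>t\<in>S. t ^ d / wt S t) = (if d = card S - 1 then 1 else 0)"
proof -
  define q where "q = (\<Sum>t\<in>S. smult (t ^ d / wt S t) (\<Prod>b\<in>S-{t}. [:-b,1:]))"
  have degP: "degree (\<Prod>b\<in>S-{t}. [:-b,1::rat:]) = card S - 1" if "t \<in> S" for t
    using fin that by (subst degree_prod_eq_sum_degree) (auto simp: card_Diff_singleton)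
  have monP: "coeff (\<Prod>b\<in>S-{t}. [:-b,1::rat:]) (card S - 1) = 1" if "t \<in> S" for t
    using lead_coeff_prod[of "\<lambda>b. [:-b,1::rat:]" "S-{t}"] degP[OF that] by simp
  have degq: "degree q \<le> card S - 1"
    unfolding q_def
    by (rule degree_sum_le) (use fin degP in \<open>auto intro: order.trans[OF degree_smult_le]\<close>)
  have evq: "poly q x = poly (monom 1 d) x" if "x \<in> S" for x
  proof -
    have "poly q x = (\<Sum>t\<in>S. t ^ d / wt S t * (\<Prod>b\<in>S-{t}. x - b))"
      unfolding q_def by (simp add: poly_sum poly_prod)
    also have "\<dots> = (\<Sum>t\<in>{x}. t ^ d / wt S t * (\<Prod>b\<in>S-{t}. x - b))"
      using fin that by (intro sum.mono_neutral_right) (auto simp: prod_zero_iff)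
    also have "\<dots> = x ^ d"
      using wt_nz[OF fin, of x] by (simp add: wt_def)
    finally show ?thesis by (simp add: poly_monom)
  qed
  have "q = monom 1 d"
    by (rule poly_eqI_degree[of S]) (use evq degq d in \<open>auto simp: degree_monom_eq\<close>)
  hence "coeff q (card S - 1) = (if d = card S - 1 then 1 else 0)"
    by (simp add: coeff_monom)
  moreover have "coeff q (card S - 1) = (\<Sum>t\<in>S. t ^ d / wt S t)"
    unfolding q_def using monP by (simp add: coeff_sum)
  ultimately show ?thesis by simp
qed


definition mmono :: "'v set \<Rightarrow> ('v \<Rightarrow> nat) \<Rightarrow> ('v \<Rightarrow> rat) \<Rightarrow> rat" where
  "mmono V u x = (\<Prod>v\<in>V. x v ^ u v)"

definition evl :: "'v set \<Rightarrow> (rat \<times> ('v \<Rightarrow> nat)) list \<Rightarrow> ('v \<Rightarrow> rat) \<Rightarrow> rat" where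
  "evl V ps x = sum_list (map (\<lambda>(c,u). c * mmono V u x) ps)"

definition dg :: "'v set \<Rightarrow> ('v \<Rightarrow> nat) \<Rightarrow> nat" where
  "dg V u = (\<Sum>v\<in>V. u v)"

definition polyd :: "'v set \<Rightarrow> nat \<Rightarrow> (('v \<Rightarrow> rat) \<Rightarrow> rat) \<Rightarrow> bool" where
  "polyd V d g \<longleftrightarrow> (\<exists>ps. (\<forall>(c,u)\<in>set ps. dg V u \<le> d) \<and> (\<forall>x. g x = evl V ps x))"

lemma polyd_const: "polyd V d (\<lambda>x. c)"
  unfolding polyd_def
  by (rule exI[of _ "[(c, \<lambda>_. 0)]"]) (simp add: evl_def mmono_def dg_def)

lemma polyd_var:
  assumes "finite V" "v \<in> V"
  shows "polyd V 1 (\<lambda>x. x v)"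
proof -
  define u where "u = (\<lambda>w. if w = v then 1 else (0::nat))"
  have "mmono V u x = x v" for x
  proof -
    have "mmono V u x = (\<Prod>w\<in>{v}. x w ^ u w)"
      unfolding mmono_def using assms by (intro prod.mono_neutral_right) (auto simp: u_def)
    thus ?thesis by (simp add: u_def)
  qed
  moreover have "dg V u = 1"
  proof -
    have "dg V u = (\<Sum>w\<in>{v}. u w)"
      unfolding dg_def using assms by (intro sum.mono_neutral_right) (auto simp: u_def)
    thus ?thesis by (simp add: u_def)
  qed
  ultimately show ?thesis unfolding polyd_def
    by (intro exI[of _ "[(1, u)]"]) (simp add: evl_def)
qed

lemma polyd_mono: "polyd V d g \<Longrightarrow> d \<le> d' \<Longrightarrow> polyd V d' g"
  unfolding polyd_def by fastforce

lemma evl_append: "evl V (ps @ qs) x = evl V ps x + evl V qs x"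
  by (simp add: evl_def)

lemma polyd_add: "polyd V d g \<Longrightarrow> polyd V d h \<Longrightarrow> polyd V d (\<lambda>x. g x + h x)"
  unfolding polyd_def
  by (elim exE conjE, rule_tac x="ps @ psa" in exI) (auto simp: evl_append)

lemma polyd_scale: "polyd V d g \<Longrightarrow> polyd V d (\<lambda>x. c * g x)"
  unfolding polyd_def
proof (elim exE conjE)
  fix ps assume h: "\<forall>(c, u)\<in>set ps. dg V u \<le> d" "\<forall>x. g x = evl V ps x"
  have "evl V (map (\<lambda>(c',u). (c * c', u)) ps) x = c * evl V ps x" for x
    by (induction ps) (auto simp: evl_def algebra_simps)
  thus "\<exists>ps. (\<forall>(c, u)\<in>set ps. dg V u \<le> d) \<and> (\<forall>x. c * g x = evl V ps x)"
    using h by (intro exI[of _ "map (\<lambda>(c',u). (c * c', u)) ps"]) auto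
qed

lemma polyd_diff: "polyd V d g \<Longrightarrow> polyd V d h \<Longrightarrow> polyd V d (\<lambda>x. g x - h x)"
  using polyd_add[of V d g "\<lambda>x. (-1) * h x"] polyd_scale[of V d h "-1"] by simp

lemma mmono_add: "mmono V (\<lambda>v. u v + u' v) x = mmono V u x * mmono V u' x"
  unfolding mmono_def by (simp add: power_add prod.distrib)

lemma dg_add: "dg V (\<lambda>v. u v + u' v) = dg V u + dg V u'"
  unfolding dg_def by (simp add: sum.distrib)

definition pmul :: "(rat \<times> ('v \<Rightarrow> nat)) list \<Rightarrow> (rat \<times> ('v \<Rightarrow> nat)) list \<Rightarrow> (rat \<times> ('v \<Rightarrow> nat)) list" where
  "pmul ps qs = concat (map (\<lambda>(c,u). map (\<lambda>(c',u'). (c*c', \<lambda>v. u v + u' v)) qs) ps)"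

lemma evl_pmul: "evl V (pmul ps qs) x = evl V ps x * evl V qs x"
proof (induction ps)
  case Nil thus ?case by (simp add: pmul_def evl_def)
next
  case (Cons a ps)
  obtain c u where a: "a = (c,u)" by (cases a)
  have "evl V (map (\<lambda>(c',u'). (c*c', \<lambda>v. u v + u' v)) qs) x = c * mmono V u x * evl V qs x"
    by (induction qs) (auto simp: evl_def mmono_add algebra_simps)
  moreover have "pmul (a # ps) qs = map (\<lambda>(c',u'). (c*c', \<lambda>v. u v + u' v)) qs @ pmul ps qs"
    by (simp add: pmul_def a)
  ultimately show ?case using Cons by (simp add: evl_append a evl_def algebra_simps)
qed

lemma set_pmul: "(c, w) \<in> set (pmul ps qs) \<Longrightarrow>
   \<exists>c1 u c2 u'. (c1,u) \<in> set ps \<and> (c2,u') \<in> set qs \<and> w = (\<lambda>v. u v + u' v)"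
  unfolding pmul_def by auto

lemma polyd_mult: "polyd V d g \<Longrightarrow> polyd V d' h \<Longrightarrow> polyd V (d + d') (\<lambda>x. g x * h x)"
  unfolding polyd_def
proof (elim exE conjE)
  fix ps qs
  assume h: "\<forall>(c, u)\<in>set ps. dg V u \<le> d" "\<forall>x. g x = evl V ps x"
     "\<forall>(c, u)\<in>set qs. dg V u \<le> d'" "\<forall>x. h x = evl V qs x"
  have "\<forall>(c, u)\<in>set (pmul ps qs). dg V u \<le> d + d'"
  proof (clarify)
    fix c w assume "(c, w) \<in> set (pmul ps qs)"
    then obtain c1 u c2 u' where "(c1,u) \<in> set ps" "(c2,u') \<in> set qs" "w = (\<lambda>v. u v + u' v)"
      using set_pmul by blast
    thus "dg V w \<le> d + d'" using h by (force simp: dg_add)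
  qed
  thus "\<exists>ps. (\<forall>(c, u)\<in>set ps. dg V u \<le> d + d') \<and> (\<forall>x. g x * h x = evl V ps x)"
    using h by (intro exI[of _ "pmul ps qs"]) (auto simp: evl_pmul)
qed

lemma polyd_prod:
  assumes "finite F" "\<And>i. i \<in> F \<Longrightarrow> polyd V (d i) (g i)"
  shows "polyd V (\<Sum>i\<in>F. d i) (\<lambda>x. \<Prod>i\<in>F. g i x)"
  using assms
proof (induction F rule: finite_induct)
  case empty thus ?case using polyd_const[of V 0 1] by simp
next
  case (insert i F)
  thus ?case using polyd_mult[of V "d i" "g i" "sum d F" "\<lambda>x. \<Prod>i\<in>F. g i x"] by simp
qed

lemma polyd_sum:
  assumes "finite F" "\<And>i. i \<in> F \<Longrightarrow> polyd V d (g i)"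
  shows "polyd V d (\<lambda>x. \<Sum>i\<in>F. g i x)"
  using assms
proof (induction F rule: finite_induct)
  case empty thus ?case using polyd_const[of V d 0] by simp
next
  case (insert i F)
  thus ?case using polyd_add[of V d "g i" "\<lambda>x. \<Sum>i\<in>F. g i x"] by simp
qed

lemma polyd_pow:
  assumes "polyd V 1 h" shows "polyd V n (\<lambda>x. h x ^ n)"
  using polyd_prod[of "{..<n}" V "\<lambda>_. 1" "\<lambda>_. h"] assms by simp

lemma polyd_poly:
  assumes "polyd V 1 h" "degree q \<le> n"
  shows "polyd V n (\<lambda>x. poly q (h x))"
proof -
  have "poly q t = (\<Sum>i\<le>n. coeff q i * t ^ i)" for t
    using assms(2) by (simp add: poly_altdef) (intro sum.mono_neutral_left, auto simp: coeff_eq_0)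
  moreover have "polyd V n (\<lambda>x. \<Sum>i\<le>n. coeff q i * h x ^ i)"
    by (intro polyd_sum polyd_scale polyd_mono[OF polyd_pow[OF assms(1)]]) auto
  ultimately show ?thesis by simp
qed


definition wi :: "int set \<Rightarrow> int \<Rightarrow> int" where
  "wi S t = (\<Prod>b\<in>S-{t}. t - b)"

lemma lagrange_int:
  fixes S :: "int set"
  assumes fin: "finite S" and d: "d < card S"
  shows "(\<Sum>t\<in>S. rat_of_int t ^ d / rat_of_int (wi S t)) = (if d = card S - 1 then 1 else 0)"
proof -
  have inj: "inj_on rat_of_int X" for X by (auto simp: inj_on_def)
  have w: "wt (rat_of_int ` S) (rat_of_int t) = rat_of_int (wi S t)" for t
  proof -
    have "rat_of_int ` S - {rat_of_int t} = rat_of_int ` (S - {t})" by auto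
    thus ?thesis unfolding wt_def wi_def
      by (simp add: prod.reindex[OF inj] of_int_prod)
  qed
  have "(\<Sum>t\<in>S. rat_of_int t ^ d / rat_of_int (wi S t)) =
        (\<Sum>t\<in>rat_of_int ` S. t ^ d / wt (rat_of_int ` S) t)"
    by (simp add: sum.reindex[OF inj] w)
  also have "\<dots> = (if d = card S - 1 then 1 else 0)"
    using lagrange_sum[of "rat_of_int ` S" d] fin d card_image[OF inj] by simp
  finally show ?thesis .
qed

definition LL :: "'v set \<Rightarrow> ('v \<Rightarrow> int set) \<Rightarrow> (('v \<Rightarrow> rat) \<Rightarrow> rat) \<Rightarrow> rat" where
  "LL V G g = (\<Sum>a\<in>PiE V G. g (\<lambda>v. rat_of_int (a v)) / rat_of_int (\<Prod>v\<in>V. wi (G v) (a v)))"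

lemma LL_mono:
  assumes fV: "finite V" and G: "\<And>v. v \<in> V \<Longrightarrow> finite (G v) \<and> card (G v) = Suc (e v)"
    and du: "dg V u \<le> dg V e"
  shows "LL V G (mmono V u) = (if \<forall>v\<in>V. u v = e v then 1 else 0)"
proof -
  have "LL V G (mmono V u) = (\<Sum>a\<in>PiE V G. \<Prod>v\<in>V. rat_of_int (a v) ^ u v / rat_of_int (wi (G v) (a v)))"
    unfolding LL_def mmono_def by (simp add: of_int_prod prod_dividef)
  also have "\<dots> = (\<Prod>v\<in>V. \<Sum>t\<in>G v. rat_of_int t ^ u v / rat_of_int (wi (G v) t))"
    by (rule prod_sum_PiE[symmetric]) (use fV G in auto)
  also have "\<dots> = (if \<forall>v\<in>V. u v = e v then 1 else 0)"
  proof (cases "\<forall>v\<in>V. u v \<le> e v")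
    case True
    have "(\<Prod>v\<in>V. \<Sum>t\<in>G v. rat_of_int t ^ u v / rat_of_int (wi (G v) t)) =
          (\<Prod>v\<in>V. if u v = e v then 1 else 0)"
      using True G by (intro prod.cong refl) (subst lagrange_int, auto)
    also have "\<dots> = (if \<forall>v\<in>V. u v = e v then 1 else 0)"
      using fV by (auto simp: prod_zero_iff)
    finally show ?thesis .
  next
    case False
    then obtain v0 where v0: "v0 \<in> V" "u v0 > e v0" by force
    have "\<exists>v1\<in>V. u v1 < e v1"
    proof (rule ccontr)
      assume "\<not> ?thesis"
      hence "\<forall>v\<in>V. e v \<le> u v" by force
      hence "dg V e < dg V u" unfolding dg_def
        using v0 fV by (intro sum_strict_mono_ex1) auto
      thus False using du by simp
    qed
    then obtain v1 where v1: "v1 \<in> V" "u v1 < e v1" by blast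
    have "(\<Sum>t\<in>G v1. rat_of_int t ^ u v1 / rat_of_int (wi (G v1) t)) = 0"
      using G[OF v1(1)] v1 by (subst lagrange_int) auto
    hence "(\<Prod>v\<in>V. \<Sum>t\<in>G v. rat_of_int t ^ u v / rat_of_int (wi (G v) t)) = 0"
      using fV v1 by (auto simp: prod_zero_iff)
    moreover have "\<not> (\<forall>v\<in>V. u v = e v)" using v0 by force
    ultimately show ?thesis by simp
  qed
  finally show ?thesis .
qed

lemma LL_cong: "(\<And>x. g x = h x) \<Longrightarrow> LL V G g = LL V G h"
  by (simp add: LL_def)

lemma LL_evl: "LL V G (evl V ps) = sum_list (map (\<lambda>(c,u). c * LL V G (mmono V u)) ps)"
proof (induction ps)
  case Nil thus ?case by (simp add: LL_def evl_def)
next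
  case (Cons a ps)
  obtain c u where a: "a = (c,u)" by (cases a)
  have "LL V G (evl V (a # ps)) = LL V G (\<lambda>x. c * mmono V u x + evl V ps x)"
    by (rule LL_cong) (simp add: evl_def a)
  also have "\<dots> = c * LL V G (mmono V u) + LL V G (evl V ps)"
    unfolding LL_def by (simp add: add_divide_distrib sum.distrib sum_distrib_left)
  finally show ?case using Cons by (simp add: a)
qed

lemma LL_diff: "LL V G (\<lambda>x. g x - h x) = LL V G g - LL V G h"
  unfolding LL_def by (simp add: diff_divide_distrib sum_subtractf)

lemma LL_top:
  assumes fV: "finite V" and G: "\<And>v. v \<in> V \<Longrightarrow> finite (G v) \<and> card (G v) = Suc (e v)"
    and H: "\<And>v. v \<in> V \<Longrightarrow> finite (H v) \<and> card (H v) = Suc (e v)"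
    and g: "polyd V (dg V e) g"
  shows "LL V G g = LL V H g"
proof -
  obtain ps where ps: "\<forall>(c, u)\<in>set ps. dg V u \<le> dg V e" "\<forall>x. g x = evl V ps x"
    using g unfolding polyd_def by blast
  have "LL V G g = sum_list (map (\<lambda>(c,u). c * LL V G (mmono V u)) ps)"
    using ps by (simp add: LL_cong[of g "evl V ps"] LL_evl)
  also have "\<dots> = sum_list (map (\<lambda>(c,u). c * LL V H (mmono V u)) ps)"
    using ps(1) LL_mono[OF fV G] LL_mono[OF fV H] by (intro arg_cong[where f=sum_list] map_cong) auto
  also have "\<dots> = LL V H g"
    using ps by (simp add: LL_cong[of g "evl V ps"] LL_evl)
  finally show ?thesis .
qed

lemma LL_low:
  assumes fV: "finite V" and G: "\<And>v. v \<in> V \<Longrightarrow> finite (G v) \<and> card (G v) = Suc (e v)"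
    and g: "polyd V d g" and d: "d < dg V e"
  shows "LL V G g = 0"
proof -
  obtain ps where ps: "\<forall>(c, u)\<in>set ps. dg V u \<le> d" "\<forall>x. g x = evl V ps x"
    using g unfolding polyd_def by blast
  have "LL V G g = sum_list (map (\<lambda>(c,u). c * LL V G (mmono V u)) ps)"
    using ps by (simp add: LL_cong[of g "evl V ps"] LL_evl)
  also have "\<dots> = sum_list (map (\<lambda>_. 0) ps)"
  proof (intro arg_cong[where f=sum_list] map_cong refl)
    fix cu assume "cu \<in> set ps"
    obtain c u where cu0: "cu = (c,u)" by (cases cu)
    with \<open>cu \<in> set ps\<close> have cu: "cu = (c,u)" "(c,u) \<in> set ps" by auto
    hence du: "dg V u \<le> d" using ps by auto
    have "\<not> (\<forall>v\<in>V. u v = e v)"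
    proof
      assume "\<forall>v\<in>V. u v = e v"
      hence "dg V u = dg V e" unfolding dg_def by simp
      thus False using du d by simp
    qed
    moreover have "LL V G (mmono V u) = (if \<forall>v\<in>V. u v = e v then 1 else 0)"
      by (rule LL_mono[OF fV G]) (use du d in auto)
    ultimately show "(case cu of (c, u) \<Rightarrow> c * LL V G (mmono V u)) = 0"
      using cu by auto
  qed
  finally show ?thesis by simp
qed


definition PR :: "'v::linorder set \<Rightarrow> ('v \<Rightarrow> 'b) \<Rightarrow> ('v \<times> 'v) set" where
  "PR V blk = {(v,w). v \<in> V \<and> w \<in> V \<and> v < w \<and> blk v = blk w}"

lemma finite_PR: "finite V \<Longrightarrow> finite (PR V blk)"
  unfolding PR_def by (rule finite_subset[of _ "V \<times> V"]) auto

lemma not_dvd_small: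
  fixes x p :: int
  assumes "x \<noteq> 0" "\<bar>x\<bar> < p"
  shows "\<not> p dvd x"
proof
  assume "p dvd x"
  hence "p dvd \<bar>x\<bar>" by simp
  moreover have "\<bar>x\<bar> > 0" using assms by simp
  ultimately have "p \<le> \<bar>x\<bar>" by (simp add: zdvd_imp_le)
  thus False using assms by simp
qed

lemma prime_not_dvd_prod:
  fixes p :: int
  assumes "prime p" "finite F" "\<And>i. i \<in> F \<Longrightarrow> \<not> p dvd f i"
  shows "\<not> p dvd (\<Prod>i\<in>F. f i)"
  using assms by (simp add: prime_dvd_prod_iff)

lemma sum_ge_PR:
  fixes a :: "'v::linorder \<Rightarrow> int"
  assumes fV: "finite V" and nn: "\<And>v. v \<in> V \<Longrightarrow> a v \<ge> 0"
    and dist: "\<And>v w. (v,w) \<in> PR V blk \<Longrightarrow> a v \<noteq> a w"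
  shows "int (card (PR V blk)) \<le> (\<Sum>v\<in>V. a v)"
proof -
  define Q2 where "Q2 = Sigma V (\<lambda>v. {w\<in>V. blk w = blk v \<and> a w < a v})"
  define g where "g = (\<lambda>(v,w). if a w < a v then (v,w) else (w,(v::'v)))"
  have "inj_on g (PR V blk)"
  proof (rule inj_onI, clarify)
    fix v w v' w' assume h: "(v,w) \<in> PR V blk" "(v',w') \<in> PR V blk" "g (v,w) = g (v',w')"
    have d1: "a v \<noteq> a w" "a v' \<noteq> a w'" using dist h(1,2) by auto
    have o: "v < w" "v' < w'" using h(1,2) by (auto simp: PR_def)
    show "v = v' \<and> w = w'"
      using h(3) d1 o unfolding g_def by (auto split: if_splits)
  qed
  moreover have "g ` PR V blk \<subseteq> Q2"
    using dist unfolding g_def Q2_def PR_def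
    by (auto split: if_splits) (metis linorder_neqE_linordered_idom)+
  moreover have "finite Q2" unfolding Q2_def using fV by auto
  ultimately have "card (PR V blk) \<le> card Q2" by (rule card_inj_on_le)
  also have "card Q2 = (\<Sum>v\<in>V. card {w\<in>V. blk w = blk v \<and> a w < a v})"
    unfolding Q2_def using fV by (subst card_SigmaI) auto
  finally have "int (card (PR V blk)) \<le> (\<Sum>v\<in>V. int (card {w\<in>V. blk w = blk v \<and> a w < a v}))"
    by (simp flip: of_nat_sum)
  also have "\<dots> \<le> (\<Sum>v\<in>V. a v)"
  proof (rule sum_mono)
    fix v assume v: "v \<in> V"
    let ?S = "{w\<in>V. blk w = blk v \<and> a w < a v}"
    have "inj_on a ?S"
    proof (rule inj_onI)
      fix w w' assume "w \<in> ?S" "w' \<in> ?S" "a w = a w'"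
      thus "w = w'" using dist[of w w'] dist[of w' w]
        by (cases w w' rule: linorder_cases) (auto simp: PR_def)
    qed
    moreover have "a ` ?S \<subseteq> {0..<a v}" using nn by auto
    ultimately have "card ?S \<le> card {0..<a v}"
      by (intro card_inj_on_le) auto
    thus "int (card ?S) \<le> a v" using nn[OF v] by simp
  qed
  finally show ?thesis .
qed


lemma poly_lin_prod: "poly (\<Prod>c\<in>F. [:- rat_of_int c, 1:]) t = (\<Prod>c\<in>F. t - rat_of_int c)"
  by (simp add: poly_prod)

lemma degree_lin_prod: "finite F \<Longrightarrow> degree (\<Prod>c\<in>F. [:- rat_of_int c, 1:]) = card F"
  by (subst degree_prod_eq_sum_degree) auto

lemma lead_lin_prod: "coeff (\<Prod>c\<in>F. [:- rat_of_int c, 1:]) (card F) = 1" if "finite F"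
  using lead_coeff_prod[of "\<lambda>c. [:- rat_of_int c, 1:]" F] degree_lin_prod[OF that] by simp

theorem anr:
  fixes V :: "'v::linorder set" and blk :: "'v \<Rightarrow> 'b" and G :: "'v \<Rightarrow> int set"
    and e :: "'v \<Rightarrow> nat" and p z :: int
  assumes pr: "prime p" and fV: "finite V"
    and G: "\<And>v. v \<in> V \<Longrightarrow> G v \<subseteq> {0..<p} \<and> card (G v) = Suc (e v)"
    and einj: "\<And>v w. (v,w) \<in> PR V blk \<Longrightarrow> e v \<noteq> e w"
    and esum: "dg V e = card (PR V blk) + nat (p - 1)"
  shows "\<exists>a\<in>PiE V G. (\<forall>(v,w)\<in>PR V blk. a v \<noteq> a w) \<and> (\<Sum>v\<in>V. a v) mod p = z mod p"
proof (rule ccontr)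
  assume contra: "\<not> ?thesis"
  have p2: "p \<ge> 2" using pr by (simp add: prime_ge_2_int)
  have Gfin: "finite (G v)" if "v \<in> V" for v
    using G[OF that] by (meson finite_atLeastLessThan_int finite_subset)
  have Gc: "finite (G v) \<and> card (G v) = Suc (e v)" if "v \<in> V" for v using G[OF that] Gfin[OF that] by simp
  have elt: "int (e v) < p" if "v \<in> V" for v
  proof -
    have "card (G v) \<le> card {0..<p}" using G[OF that] by (intro card_mono) auto
    thus ?thesis using G[OF that] by simp
  qed
  define P where "P = card (PR V blk)"
  define m where "m = nat (p - 1)"
  define D where "D = dg V e"
  have DPm: "D = P + m" using esum by (simp add: D_def P_def m_def)
  have m1: "m \<ge> 1" using p2 by (simp add: m_def)
  define Vd where "Vd = (\<lambda>x::'v\<Rightarrow>rat. \<Prod>(v,w)\<in>PR V blk. x w - x v)"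
  define s where "s = (\<lambda>x::'v\<Rightarrow>rat. \<Sum>v\<in>V. x v)"
  define E where "E = {0..<p} - {z mod p}"
  define Q where "Q = (\<Prod>c\<in>E. [:- rat_of_int c, 1:])"
  define Q' where "Q' = (\<Prod>c\<in>{int P..<int D}. [:- rat_of_int c, 1:])"
  define f where "f = (\<lambda>x. Vd x * poly Q (s x))"
  define f' where "f' = (\<lambda>x. Vd x * poly Q' (s x))"
  have finE: "finite E" unfolding E_def by auto
  have cardE: "card E = m"
  proof -
    have "z mod p \<in> {0..<p}" using p2 by auto
    thus ?thesis unfolding E_def m_def by (subst card_Diff_singleton) auto
  qed
  have degQ: "degree Q = m" unfolding Q_def using degree_lin_prod[OF finE] cardE by simp
  have degQ': "degree Q' = m" unfolding Q'_def using degree_lin_prod[of "{int P..<int D}"] DPm by simp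
  have lcQ: "coeff Q m = 1" unfolding Q_def using lead_lin_prod[OF finE] cardE by simp
  have lcQ': "coeff Q' m = 1" unfolding Q'_def using lead_lin_prod[of "{int P..<int D}"] DPm by simp
  have degdiff: "degree (Q - Q') \<le> m - 1"
  proof -
    have c0: "coeff (Q - Q') m = 0" using lcQ lcQ' by simp
    have le: "degree (Q - Q') \<le> m" using degree_diff_le_max[of Q Q'] degQ degQ' by simp
    show ?thesis
    proof (cases "degree (Q - Q') = m")
      case True
      hence "Q - Q' = 0" using c0 by (metis leading_coeff_0_iff)
      thus ?thesis by simp
    next
      case False thus ?thesis using le by simp
    qed
  qed
  have pVd: "polyd V P Vd"
  proof -
    have "polyd V (\<Sum>vw\<in>PR V blk. 1) (\<lambda>x. \<Prod>vw\<in>PR V blk. (\<lambda>(v,w). x w - x v) vw)"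
    proof (rule polyd_prod[OF finite_PR[OF fV]])
      fix vw assume "vw \<in> PR V blk"
      then obtain v w where vw: "vw = (v,w)" "v \<in> V" "w \<in> V" by (auto simp: PR_def)
      show "polyd V 1 (\<lambda>x. (\<lambda>(v, w). x w - x v) vw)"
        using polyd_diff[OF polyd_var[OF fV vw(3)] polyd_var[OF fV vw(2)]] vw by simp
    qed
    thus ?thesis by (simp add: Vd_def P_def case_prod_beta)
  qed
  have ps: "polyd V 1 s" unfolding s_def by (intro polyd_sum fV polyd_var)
  have pf: "polyd V D f" unfolding f_def DPm
    by (intro polyd_mult pVd polyd_poly[OF ps]) (simp add: degQ)
  have pf': "polyd V D f'" unfolding f'_def DPm
    by (intro polyd_mult pVd polyd_poly[OF ps]) (simp add: degQ')
  have pdiff: "polyd V (P + (m - 1)) (\<lambda>x. f x - f' x)"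
  proof -
    have "polyd V (P + (m - 1)) (\<lambda>x. Vd x * poly (Q - Q') (s x))"
      by (intro polyd_mult pVd polyd_poly[OF ps] degdiff)
    thus ?thesis by (simp add: f_def f'_def algebra_simps)
  qed
  define H where "H = (\<lambda>v. {0..int (e v)})"
  have Hc: "finite (H v) \<and> card (H v) = Suc (e v)" for v unfolding H_def by simp
  have L1: "LL V G f = LL V G f'"
  proof -
    have "LL V G (\<lambda>x. f x - f' x) = 0"
      by (rule LL_low[OF fV Gc pdiff]) (use DPm m1 in \<open>auto simp: D_def\<close>)
    thus ?thesis by (simp add: LL_diff)
  qed
  have L2: "LL V G f' = LL V H f'"
    by (rule LL_top[OF fV Gc Hc]) (use pf' in \<open>unfold D_def\<close>)
  define eh where "eh = restrict (\<lambda>v. int (e v)) V"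
  have ehH: "eh \<in> PiE V H" unfolding eh_def H_def by auto
  have vanish: "f' (\<lambda>v. rat_of_int (a v)) = 0" if a: "a \<in> PiE V H" "a \<noteq> eh" for a
  proof (cases "\<exists>(v,w)\<in>PR V blk. a v = a w")
    case True
    then obtain v w where "(v,w) \<in> PR V blk" "a v = a w" by blast
    hence "Vd (\<lambda>v. rat_of_int (a v)) = 0" unfolding Vd_def
      by (intro prod_zero finite_PR fV bexI[of _ "(v,w)"]) auto
    thus ?thesis by (simp add: f'_def)
  next
    case False
    have nn: "a v \<ge> 0" "a v \<le> int (e v)" if "v \<in> V" for v using a(1) that by (auto simp: H_def)
    have lo: "int P \<le> (\<Sum>v\<in>V. a v)" unfolding P_def
      by (rule sum_ge_PR[OF fV]) (use nn False in auto)
    obtain v0 where v0: "v0 \<in> V" "a v0 \<noteq> int (e v0)"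
    proof -
      from a obtain v where "a v \<noteq> eh v" by auto
      moreover have "v \<in> V"
      proof (rule ccontr)
        assume "v \<notin> V"
        hence "a v = undefined" "eh v = undefined" using a(1) by (auto simp: eh_def PiE_def extensional_def)
        thus False using calculation by simp
      qed
      ultimately show ?thesis using that by (auto simp: eh_def)
    qed
    have "(\<Sum>v\<in>V. a v) < (\<Sum>v\<in>V. int (e v))"
      using nn v0 by (intro sum_strict_mono_ex1 fV) (auto intro!: bexI[of _ v0] simp: order_less_le)
    hence hi: "(\<Sum>v\<in>V. a v) < int D" by (simp add: D_def dg_def)
    have "poly Q' (s (\<lambda>v. rat_of_int (a v))) = 0"
      unfolding Q'_def poly_lin_prod s_def using lo hi
      by (auto simp: prod_zero_iff intro!: bexI[of _ "\<Sum>v\<in>V. a v"])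
    thus ?thesis by (simp add: f'_def)
  qed
  have L3: "LL V H f' = f' (\<lambda>v. rat_of_int (eh v)) / rat_of_int (\<Prod>v\<in>V. wi (H v) (eh v))"
  proof -
    have "LL V H f' = (\<Sum>a\<in>{eh}. f' (\<lambda>v. rat_of_int (a v)) / rat_of_int (\<Prod>v\<in>V. wi (H v) (a v)))"
      unfolding LL_def using vanish ehH
      by (intro sum.mono_neutral_right finite_PiE fV) (auto simp: H_def)
    thus ?thesis by simp
  qed
  define NH where "NH = (\<Prod>(v,w)\<in>PR V blk. int (e w) - int (e v)) * (\<Prod>c\<in>{int P..<int D}. int D - c)"
  define WH where "WH = (\<Prod>v\<in>V. wi (H v) (int (e v)))"
  have f'eh: "f' (\<lambda>v. rat_of_int (eh v)) = rat_of_int NH"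
  proof -
    have "Vd (\<lambda>v. rat_of_int (eh v)) = rat_of_int (\<Prod>(v,w)\<in>PR V blk. int (e w) - int (e v))"
      unfolding Vd_def of_int_prod
      by (intro prod.cong refl) (auto simp: PR_def eh_def)
    moreover have "s (\<lambda>v. rat_of_int (eh v)) = rat_of_int (int D)"
      unfolding s_def D_def dg_def eh_def by simp
    ultimately show ?thesis unfolding f'_def NH_def Q'_def poly_lin_prod
      by (simp add: of_int_prod)
  qed
  have WHeq: "(\<Prod>v\<in>V. wi (H v) (eh v)) = WH"
    unfolding WH_def eh_def by (intro prod.cong) auto
  have NHnd: "\<not> p dvd NH"
  proof -
    have "\<not> p dvd (\<Prod>(v,w)\<in>PR V blk. int (e w) - int (e v))"
    proof (rule prime_not_dvd_prod[OF pr finite_PR[OF fV]])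
      fix vw assume "vw \<in> PR V blk"
      then obtain v w where vw: "vw = (v,w)" "(v,w) \<in> PR V blk" by (cases vw) auto
      hence "v \<in> V" "w \<in> V" by (auto simp: PR_def)
      hence "\<bar>int (e w) - int (e v)\<bar> < p" using elt[of v] elt[of w] by (simp add: abs_if)
      moreover have "int (e w) - int (e v) \<noteq> 0" using einj[OF vw(2)] by simp
      ultimately show "\<not> p dvd (case vw of (v,w) \<Rightarrow> int (e w) - int (e v))"
        using not_dvd_small vw by auto
    qed
    moreover have "\<not> p dvd (\<Prod>c\<in>{int P..<int D}. int D - c)"
    proof (rule prime_not_dvd_prod[OF pr])
      fix c assume "c \<in> {int P..<int D}"
      thus "\<not> p dvd (int D - c)" using DPm p2 by (intro not_dvd_small) (auto simp: m_def)
    qed auto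
    ultimately show ?thesis unfolding NH_def using pr by (simp add: prime_dvd_mult_iff)
  qed
  have wind: "\<not> p dvd wi S t" if "S \<subseteq> {0..<p}" "t \<in> {0..<p}" "finite S" for S t
    unfolding wi_def
  proof (rule prime_not_dvd_prod[OF pr])
    fix b assume "b \<in> S - {t}"
    thus "\<not> p dvd (t - b)" using that by (intro not_dvd_small) (auto simp: abs_if subset_iff)
  qed (use that in auto)
  have WHnd: "\<not> p dvd WH" unfolding WH_def
  proof (rule prime_not_dvd_prod[OF pr fV])
    fix v assume v: "v \<in> V"
    show "\<not> p dvd wi (H v) (int (e v))"
      by (rule wind) (use elt[OF v] in \<open>auto simp: H_def\<close>)
  qed
  define A where "A = PiE V G"
  have finA: "finite A" unfolding A_def using Gfin fV by (intro finite_PiE) auto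
  define Wg where "Wg = (\<lambda>a. \<Prod>v\<in>V. wi (G v) (a v))"
  define Fi where "Fi = (\<lambda>a. (\<Prod>(v,w)\<in>PR V blk. a w - a v) * (\<Prod>c\<in>E. (\<Sum>v\<in>V. a v) - c))"
  have Wgnd: "\<not> p dvd Wg a" if "a \<in> A" for a
    unfolding Wg_def
  proof (rule prime_not_dvd_prod[OF pr fV])
    fix v assume v: "v \<in> V"
    have "a v \<in> G v" using that v by (auto simp: A_def)
    thus "\<not> p dvd wi (G v) (a v)" using G[OF v] Gfin[OF v] by (intro wind) auto
  qed
  have Fidvd: "p dvd Fi a" if "a \<in> A" for a
  proof (cases "\<exists>(v,w)\<in>PR V blk. a v = a w")
    case True
    then obtain v w where "(v,w) \<in> PR V blk" "a v = a w" by blast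
    hence "(\<Prod>(v,w)\<in>PR V blk. a w - a v) = 0"
      by (intro prod_zero finite_PR fV bexI[of _ "(v,w)"]) auto
    thus ?thesis by (simp add: Fi_def)
  next
    case False
    hence "(\<Sum>v\<in>V. a v) mod p \<noteq> z mod p" using contra that by (auto simp: A_def)
    hence inE: "(\<Sum>v\<in>V. a v) mod p \<in> E" using p2 by (auto simp: E_def)
    have "p dvd (\<Sum>v\<in>V. a v) - (\<Sum>v\<in>V. a v) mod p"
      by (simp add: minus_mod_eq_mult_div)
    hence "p dvd (\<Prod>c\<in>E. (\<Sum>v\<in>V. a v) - c)"
    proof -
      have "((\<Sum>v\<in>V. a v) - (\<Sum>v\<in>V. a v) mod p) dvd (\<Prod>c\<in>E. (\<Sum>v\<in>V. a v) - c)"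
        by (rule dvd_prodI[OF finE inE])
      thus ?thesis using \<open>p dvd _\<close> by (rule dvd_trans[rotated])
    qed
    thus ?thesis by (simp add: Fi_def)
  qed
  have fG: "f (\<lambda>v. rat_of_int (a v)) = rat_of_int (Fi a)" for a
    unfolding f_def Fi_def Vd_def s_def Q_def poly_lin_prod of_int_mult of_int_prod
    by (intro arg_cong2[where f="(*)"] prod.cong refl) (auto simp: of_int_sum)
  have LG: "LL V G f = (\<Sum>a\<in>A. rat_of_int (Fi a) / rat_of_int (Wg a))"
    by (simp only: LL_def A_def Wg_def fG)
  define WW where "WW = (\<Prod>a\<in>A. Wg a)"
  have "rat_of_int WW * LL V G f = rat_of_int (\<Sum>a\<in>A. Fi a * (\<Prod>b\<in>A-{a}. Wg b))"
    unfolding LG sum_distrib_left of_int_sum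
  proof (intro sum.cong refl)
    fix a assume a: "a \<in> A"
    have "Wg a \<noteq> 0" using Wgnd[OF a] by (metis dvd_0_right)
    moreover have "WW = Wg a * (\<Prod>b\<in>A-{a}. Wg b)" unfolding WW_def by (rule prod.remove[OF finA a])
    ultimately show "rat_of_int WW * (rat_of_int (Fi a) / rat_of_int (Wg a)) =
      rat_of_int (Fi a * (\<Prod>b\<in>A-{a}. Wg b))" by simp
  qed
  moreover have "p dvd (\<Sum>a\<in>A. Fi a * (\<Prod>b\<in>A-{a}. Wg b))"
    using Fidvd by (intro dvd_sum dvd_mult2) auto
  then obtain M where M: "(\<Sum>a\<in>A. Fi a * (\<Prod>b\<in>A-{a}. Wg b)) = p * M" by (elim dvdE)
  ultimately have eq1: "rat_of_int WW * LL V G f = rat_of_int (p * M)" by simp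
  have eq2: "LL V G f = rat_of_int NH / rat_of_int WH"
    using L1 L2 L3 f'eh WHeq by simp
  have WH0: "WH \<noteq> 0" using WHnd by (metis dvd_0_right)
  have "rat_of_int (WW * NH) = rat_of_int (p * M * WH)"
    using eq1 eq2 WH0 by (simp add: field_simps)
  hence "WW * NH = p * M * WH" by (simp only: of_int_eq_iff)
  hence "p dvd WW * NH" by (simp add: mult.assoc)
  moreover have "\<not> p dvd WW" unfolding WW_def using Wgnd finA by (intro prime_not_dvd_prod[OF pr]) auto
  ultimately show False using NHnd pr by (simp add: prime_dvd_mult_iff)
qed


lemma choose_r:
  fixes R :: "'i \<Rightarrow> nat"
  assumes "finite I" "t \<le> (\<Sum>i\<in>I. R i)"
  shows "\<exists>r. (\<forall>i\<in>I. r i \<le> R i) \<and> (\<Sum>i\<in>I. r i) = t"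
  using assms
proof (induction I arbitrary: t rule: finite_induct)
  case empty thus ?case by auto
next
  case (insert i I)
  define t1 where "t1 = min (R i) t"
  have "t - t1 \<le> (\<Sum>i\<in>I. R i)" using insert by (auto simp: t1_def)
  then obtain r where r: "\<forall>i\<in>I. r i \<le> R i" "(\<Sum>i\<in>I. r i) = t - t1" using insert by blast
  define r' where "r' = r(i := t1)"
  have "(\<Sum>j\<in>I. r' j) = (\<Sum>j\<in>I. r j)" using insert by (intro sum.cong) (auto simp: r'_def)
  hence "(\<Sum>j\<in>insert i I. r' j) = t" using insert r by (simp add: r'_def t1_def)
  moreover have "\<forall>j\<in>insert i I. r' j \<le> R j" using r by (auto simp: r'_def t1_def)
  ultimately show ?case by blast
qed

lemma choose_q:
  fixes M :: nat
  shows "r \<le> k * M \<Longrightarrow> \<exists>q. (\<forall>j<k. q j \<le> M) \<and> (\<forall>j j'. j \<le> j' \<longrightarrow> j' < k \<longrightarrow> q j \<le> q j') \<and> (\<Sum>j<k. q j) = r"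
proof (induction k arbitrary: r)
  case 0 thus ?case by auto
next
  case (Suc k)
  show ?case
  proof (cases "r \<ge> M")
    case True
    then obtain q where q: "\<forall>j<k. q j \<le> M" "\<forall>j j'. j \<le> j' \<longrightarrow> j' < k \<longrightarrow> q j \<le> q j'" "(\<Sum>j<k. q j) = r - M"
    proof -
      have "r - M \<le> k * M" using Suc.prems by (simp add: algebra_simps)
      thus ?thesis using Suc.IH[of "r - M"] that by blast
    qed
    define q' where "q' = q(k := M)"
    have "(\<Sum>j<k. q' j) = (\<Sum>j<k. q j)" by (intro sum.cong) (auto simp: q'_def)
    hence "(\<Sum>j<Suc k. q' j) = r" using q True by (simp add: q'_def)
    moreover have "\<forall>j<Suc k. q' j \<le> M" using q by (auto simp: q'_def less_Suc_eq)
    moreover have "\<forall>j j'. j \<le> j' \<longrightarrow> j' < Suc k \<longrightarrow> q' j \<le> q' j'"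
      using q by (auto simp: q'_def less_Suc_eq)
    ultimately show ?thesis by blast
  next
    case False
    define q' where "q' = (\<lambda>j. if j = k then r else (0::nat))"
    have "(\<Sum>j<Suc k. q' j) = r" by (simp add: q'_def)
    moreover have "\<forall>j<Suc k. q' j \<le> M" using False by (auto simp: q'_def)
    moreover have "\<forall>j j'. j \<le> j' \<longrightarrow> j' < Suc k \<longrightarrow> q' j \<le> q' j'"
      by (auto simp: q'_def)
    ultimately show ?thesis by blast
  qed
qed

theorem core:
  fixes I :: "nat set" and Y :: "nat \<Rightarrow> int set" and k :: "nat \<Rightarrow> nat" and p z :: int
  assumes pr: "prime p" and fI: "finite I"
    and Y: "\<And>i. i \<in> I \<Longrightarrow> Y i \<subseteq> {0..<p}"
    and kle: "\<And>i. i \<in> I \<Longrightarrow> k i \<le> card (Y i)"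
    and big: "nat (p - 1) \<le> (\<Sum>i\<in>I. k i * (card (Y i) - k i))"
  shows "\<exists>T. (\<forall>i\<in>I. T i \<subseteq> Y i \<and> card (T i) = k i) \<and> (\<Sum>i\<in>I. \<Sum>t\<in>T i. t) mod p = z mod p"
proof -
  obtain r where r: "\<forall>i\<in>I. r i \<le> k i * (card (Y i) - k i)" "(\<Sum>i\<in>I. r i) = nat (p - 1)"
    using choose_r[OF fI big] by blast
  have "\<forall>i. \<exists>q. i \<in> I \<longrightarrow> (\<forall>j<k i. q j \<le> card (Y i) - k i) \<and>
      (\<forall>j j'. j \<le> j' \<longrightarrow> j' < k i \<longrightarrow> q j \<le> q j') \<and> (\<Sum>j<k i. q j) = r i"
    using choose_q r(1) by blast
  then obtain q where q: "\<And>i. i \<in> I \<Longrightarrow> (\<forall>j<k i. q i j \<le> card (Y i) - k i) \<and>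
      (\<forall>j j'. j \<le> j' \<longrightarrow> j' < k i \<longrightarrow> q i j \<le> q i j') \<and> (\<Sum>j<k i. q i j) = r i"
    by metis
  define V where "V = Sigma I (\<lambda>i. {..<k i})"
  define e where "e = (\<lambda>(i,j). j + q i j)"
  have fV: "finite V" unfolding V_def using fI by auto
  have fY: "finite (Y i)" if "i \<in> I" for i
    using Y[OF that] by (meson finite_atLeastLessThan_int finite_subset)
  have elt: "e (i,j) < card (Y i)" if "(i,j) \<in> V" for i j
    using q[of i] kle[of i] that by (force simp: V_def e_def)
  have "\<forall>v. \<exists>S. v \<in> V \<longrightarrow> S \<subseteq> Y (fst v) \<and> card S = Suc (e v)"
  proof (intro allI)
    fix v show "\<exists>S. v \<in> V \<longrightarrow> S \<subseteq> Y (fst v) \<and> card S = Suc (e v)"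
    proof (cases "v \<in> V")
      case True
      then obtain i j where v: "v = (i,j)" "i \<in> I" by (auto simp: V_def)
      have "Suc (e v) \<le> card (Y i)" using elt[of i j] True v by (simp add: Suc_le_eq)
      then obtain S where "S \<subseteq> Y i" "card S = Suc (e v)"
        using obtain_subset_with_card_n by metis
      thus ?thesis using v by auto
    qed auto
  qed
  then obtain G where G: "\<And>v. v \<in> V \<Longrightarrow> G v \<subseteq> Y (fst v) \<and> card (G v) = Suc (e v)"
    by metis
  have G': "G v \<subseteq> {0..<p} \<and> card (G v) = Suc (e v)" if "v \<in> V" for v
    using G[OF that] Y[of "fst v"] that by (auto simp: V_def subset_iff)
  have einj: "e v \<noteq> e w" if vw0: "(v,w) \<in> PR V fst" for v w
  proof -
    obtain i j j' where vw: "v = (i,j)" "w = (i,j')" "j < j'" "j' < k i" "i \<in> I"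
      using vw0 by (cases v; cases w) (auto simp: PR_def V_def less_prod_def)
    have "q i j \<le> q i j'" using q[OF vw(5)] vw by auto
    thus ?thesis using vw by (simp add: e_def)
  qed
  have cardPR: "card (PR V fst) = (\<Sum>v\<in>V. snd v)"
  proof -
    have "bij_betw (\<lambda>(v,w). (w, snd v)) (PR V fst) (Sigma V (\<lambda>w. {..<snd w}))"
    proof (rule bij_betw_byWitness[where f'="\<lambda>(w,j). ((fst w, j), w)"])
      show "\<forall>a\<in>PR V fst. (\<lambda>(w, j). ((fst w, j), w)) ((\<lambda>(v, w). (w, snd v)) a) = a"
        by (auto simp: PR_def)
      show "\<forall>a\<in>Sigma V (\<lambda>w. {..<snd w}). (\<lambda>(v, w). (w, snd v)) ((\<lambda>(w, j). ((fst w, j), w)) a) = a"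
        by auto
      show "(\<lambda>(v, w). (w, snd v)) ` PR V fst \<subseteq> Sigma V (\<lambda>w. {..<snd w})"
        by (auto simp: PR_def)
      show "(\<lambda>(w, j). ((fst w, j), w)) ` Sigma V (\<lambda>w. {..<snd w}) \<subseteq> PR V fst"
        by (auto simp: PR_def V_def)
    qed
    hence "card (PR V fst) = card (Sigma V (\<lambda>w. {..<snd w}))" by (rule bij_betw_same_card)
    also have "\<dots> = (\<Sum>v\<in>V. snd v)" using fV by (subst card_SigmaI) auto
    finally show ?thesis .
  qed
  have esum: "dg V e = card (PR V fst) + nat (p - 1)"
  proof -
    have "dg V e = (\<Sum>v\<in>V. snd v) + (\<Sum>v\<in>V. q (fst v) (snd v))"
      unfolding dg_def e_def by (simp add: case_prod_beta sum.distrib)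
    also have "(\<Sum>v\<in>V. q (fst v) (snd v)) = (\<Sum>(i,j)\<in>V. q i j)"
      by (simp add: case_prod_beta)
    also have "\<dots> = (\<Sum>i\<in>I. \<Sum>j<k i. q i j)"
      unfolding V_def by (rule sum.Sigma[symmetric]) (use fI in auto)
    also have "\<dots> = (\<Sum>i\<in>I. r i)" using q by (intro sum.cong) auto
    finally show ?thesis using cardPR r(2) by simp
  qed
  obtain a where a: "a \<in> PiE V G" "\<forall>(v,w)\<in>PR V fst. a v \<noteq> a w" "(\<Sum>v\<in>V. a v) mod p = z mod p"
    using anr[OF pr fV G' einj esum, of z] by blast
  define T where "T = (\<lambda>i. (\<lambda>j. a (i,j)) ` {..<k i})"
  have inj: "inj_on (\<lambda>j. a (i,j)) {..<k i}" if "i \<in> I" for i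
  proof (rule inj_onI)
    fix j j' assume h: "j \<in> {..<k i}" "j' \<in> {..<k i}" "a (i,j) = a (i,j')"
    show "j = j'"
    proof (rule ccontr)
      assume "j \<noteq> j'"
      hence "((i, min j j'), (i, max j j')) \<in> PR V fst"
        using h that by (auto simp: PR_def V_def min_def max_def)
      thus False using a(2) h(3) by (auto simp: min_def max_def split: if_splits)
    qed
  qed
  have "\<forall>i\<in>I. T i \<subseteq> Y i \<and> card (T i) = k i"
  proof
    fix i assume i: "i \<in> I"
    have "a (i,j) \<in> Y i" if "j < k i" for j
      using a(1) G[of "(i,j)"] that i by (auto simp: V_def PiE_def Pi_def)
    thus "T i \<subseteq> Y i \<and> card (T i) = k i"
      using card_image[OF inj[OF i]] by (auto simp: T_def)
  qed
  moreover have "(\<Sum>i\<in>I. \<Sum>t\<in>T i. t) = (\<Sum>v\<in>V. a v)"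
  proof -
    have "(\<Sum>i\<in>I. \<Sum>t\<in>T i. t) = (\<Sum>i\<in>I. \<Sum>j<k i. a (i,j))"
      by (intro sum.cong refl) (simp add: T_def sum.reindex[OF inj])
    also have "\<dots> = (\<Sum>(i,j)\<in>V. a (i,j))"
      unfolding V_def by (rule sum.Sigma) (use fI in auto)
    also have "\<dots> = (\<Sum>v\<in>V. a v)" by (simp add: case_prod_beta)
    finally show ?thesis .
  qed
  ultimately show ?thesis using a(3) by (intro exI[of _ T]) simp
qed


lemma hom_zero:
  fixes p a :: int
  assumes "0 \<le> a" "a < p" "(a + a) mod p = a"
  shows "a = 0"
proof -
  have "(a + a) mod p = a mod p" using assms by simp
  hence "p dvd (a + a) - a" by (simp add: mod_eq_dvd_iff)
  hence "p dvd a" by simp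
  thus ?thesis using assms zdvd_imp_le[of p a] by (cases "a = 0") auto
qed

lemma phi_form:
  fixes p :: int and \<phi> :: "int \<Rightarrow> int \<times> int"
  assumes p2: "p \<ge> 2" and bij: "bij_betw \<phi> (Zp p) U" and UZ: "U \<subseteq> Zp2 p"
    and hom: "\<forall>a\<in>Zp p. \<forall>b\<in>Zp p. \<phi> (addp p a b) = add2 p (\<phi> a) (\<phi> b)"
    and t: "t \<in> Zp p"
  shows "\<phi> t = ((t * fst (\<phi> 1)) mod p, (t * snd (\<phi> 1)) mod p)"
proof -
  have inZ: "\<phi> s \<in> Zp2 p" if "s \<in> Zp p" for s
    using bij UZ that by (auto simp: bij_betw_def)
  have z0: "0 \<in> Zp p" "1 \<in> Zp p" using p2 by (auto simp: Zp_def)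
  have "\<phi> 0 = \<phi> (addp p 0 0)" by (simp add: addp_def)
  also have "\<dots> = add2 p (\<phi> 0) (\<phi> 0)" using hom z0 by auto
  finally have e0: "\<phi> 0 = add2 p (\<phi> 0) (\<phi> 0)" .
  have f0: "\<phi> 0 = (0, 0)"
  proof -
    obtain a b where ab: "\<phi> 0 = (a,b)" by (cases "\<phi> 0")
    have "a \<in> Zp p" "b \<in> Zp p" using inZ[OF z0(1)] ab by (auto simp: Zp2_def)
    moreover have "(a + a) mod p = a" "(b + b) mod p = b" using e0 ab by (auto simp: add2_def)
    ultimately show ?thesis using ab hom_zero by (auto simp: Zp_def)
  qed
  have "n < p \<longrightarrow> \<phi> (int n) = ((int n * fst (\<phi> 1)) mod p, (int n * snd (\<phi> 1)) mod p)" for n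
  proof (induction n)
    case 0 thus ?case using f0 by simp
  next
    case (Suc n)
    show ?case
    proof
      assume n: "int (Suc n) < p"
      have "int (Suc n) = addp p (int n) 1" using n by (simp add: addp_def)
      hence "\<phi> (int (Suc n)) = add2 p (\<phi> (int n)) (\<phi> 1)"
        using hom n z0 by (auto simp: Zp_def)
      also have "\<dots> = ((int (Suc n) * fst (\<phi> 1)) mod p, (int (Suc n) * snd (\<phi> 1)) mod p)"
        using Suc n by (simp add: add2_def algebra_simps) (metis mod_add_right_eq)
      finally show "\<phi> (int (Suc n)) = ((int (Suc n) * fst (\<phi> 1)) mod p, (int (Suc n) * snd (\<phi> 1)) mod p)" .
    qed
  qed
  moreover have "t = int (nat t)" "int (nat t) < p" using t by (auto simp: Zp_def)
  ultimately show ?thesis by metis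
qed

lemma hom_pi_zero:
  fixes p :: int
  assumes p2: "p \<ge> 2"
    and piZ: "\<forall>y\<in>Zp2 p. \<pi> y \<in> Zp p"
    and pihom: "\<forall>y\<in>Zp2 p. \<forall>z\<in>Zp2 p. \<pi> (add2 p y z) = addp p (\<pi> y) (\<pi> z)"
  shows "\<pi> (0,0) = 0"
proof -
  have z: "(0,0) \<in> Zp2 p" using p2 by (auto simp: Zp2_def Zp_def)
  have "\<pi> (0,0) = \<pi> (add2 p (0,0) (0,0))" by (simp add: add2_def)
  also have "\<dots> = (\<pi> (0,0) + \<pi> (0,0)) mod p" using pihom z by (simp add: addp_def)
  finally show ?thesis using piZ z hom_zero[of "\<pi> (0,0)" p] by (auto simp: Zp_def)
qed

lemma add2_Zp2: "p > 0 \<Longrightarrow> add2 p a b \<in> Zp2 p"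
  by (simp add: add2_def Zp2_def Zp_def)

lemma neg2_Zp2: "p > 0 \<Longrightarrow> neg2 p a \<in> Zp2 p"
  by (simp add: neg2_def Zp2_def Zp_def)

lemma sum2_Zp2: "p > 0 \<Longrightarrow> sum2 p S \<in> Zp2 p"
  by (simp add: sum2_def Zp2_def Zp_def)

lemma pi_sum2:
  fixes p :: int
  assumes p2: "p \<ge> 2"
    and piZ: "\<forall>y\<in>Zp2 p. \<pi> y \<in> Zp p"
    and pihom: "\<forall>y\<in>Zp2 p. \<forall>z\<in>Zp2 p. \<pi> (add2 p y z) = addp p (\<pi> y) (\<pi> z)"
    and S: "finite S" "S \<subseteq> Zp2 p"
  shows "\<pi> (sum2 p S) = (\<Sum>b\<in>S. \<pi> b) mod p"
  using S
proof (induction S rule: finite_induct)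
  case empty thus ?case using hom_pi_zero[OF p2 piZ pihom] by (simp add: sum2_def)
next
  case (insert b S)
  have bZ: "b \<in> Zp2 p" using insert by auto
  have "sum2 p (insert b S) = add2 p b (sum2 p S)"
    using insert by (simp add: sum2_def add2_def mod_add_right_eq)
  hence "\<pi> (sum2 p (insert b S)) = (\<pi> b + \<pi> (sum2 p S)) mod p"
    using pihom bZ sum2_Zp2[of p S] p2 by (simp add: addp_def)
  also have "\<dots> = (\<pi> b + (\<Sum>b\<in>S. \<pi> b) mod p) mod p" using insert by simp
  also have "\<dots> = (\<Sum>b\<in>insert b S. \<pi> b) mod p" using insert by (simp add: mod_add_right_eq)
  finally show ?case .
qed


lemma add2_cancel:
  assumes "b \<in> Zp2 p" "b' \<in> Zp2 p" "add2 p a b = add2 p a b'"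
  shows "b = b'"
proof -
  have c: "y = y'" if "0 \<le> y" "y < p" "0 \<le> y'" "y' < p" "(x + y) mod p = (x + y') mod p" for x y y' :: int
  proof (rule ccontr)
    assume ne: "y \<noteq> y'"
    have "p dvd (x + y) - (x + y')" using that(5) by (simp add: mod_eq_dvd_iff)
    hence "p dvd y - y'" by simp
    moreover have "\<bar>y - y'\<bar> < p" using that by (simp add: abs_if)
    ultimately show False using not_dvd_small[of "y - y'" p] ne by simp
  qed
  show ?thesis using assms c[of "snd b" "snd b'" "snd a"] c[of "fst b" "fst b'" "fst a"]
    by (cases b, cases b') (auto simp: add2_def Zp2_def Zp_def)
qed

theorem lemma5:
  fixes p :: int
    and A B U :: "(int \<times> int) set"
    and \<pi> :: "int \<times> int \<Rightarrow> int"
    and x :: "nat \<Rightarrow> int \<times> int"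
  assumes "prime p"
    and "A \<subseteq> Zp2 p"
    and "card A = nat p - 1 + Ol p"
    and "is_subgroup2 p U"
    and "iso_to_Zp p U"
    and "B \<subseteq> A"
    and "\<forall>y\<in>Zp2 p. \<pi> y \<in> Zp p"
    and "\<forall>y\<in>Zp2 p. \<forall>z\<in>Zp2 p. \<pi> (add2 p y z) = addp p (\<pi> y) (\<pi> z)"
    and "\<pi> ` Zp2 p = Zp p"
    and "{y \<in> Zp2 p. \<pi> y = 0} = U"
    and "\<forall>i\<in>{1..nat p}. x i \<in> Zp2 p"
    and "\<forall>y\<in>Zp2 p. \<exists>!i. i \<in> {1..nat p} \<and> y \<in> coset2 p (x i) U"
    and "\<forall>z\<in>Zp p. \<exists>S\<subseteq>B. (\<Sum>b\<in>S. \<pi> b) mod p = z"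
    and "(\<Sum>i=1..nat p. (N p (x i) U (A - B) div 2) * ((N p (x i) U (A - B) + 1) div 2))
           \<ge> nat p + 1"
  shows "\<exists>T\<subseteq>A. T \<noteq> {} \<and> sum2 p T = (0, 0)"
proof -
  note pr = assms(1) and AZ = assms(2) and BA = assms(6) and piZ = assms(7) and pihom = assms(8)
    and ker = assms(10) and xZ = assms(11) and xuniq = assms(12) and Bsums = assms(13) and big = assms(14)
  have p2: "p \<ge> 2" using pr by (simp add: prime_ge_2_int)
  have p0: "p > 0" using p2 by simp
  define I where "I = {1..nat p}"
  have fI: "finite I" by (simp add: I_def)
  obtain \<phi> where \<phi>bij: "bij_betw \<phi> (Zp p) U"
    and \<phi>hom: "\<forall>a\<in>Zp p. \<forall>b\<in>Zp p. \<phi> (addp p a b) = add2 p (\<phi> a) (\<phi> b)"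
    using assms(5) unfolding iso_to_Zp_def by blast
  have UZ: "U \<subseteq> Zp2 p" using assms(4) by (simp add: is_subgroup2_def)
  define g1 where "g1 = fst (\<phi> 1)"
  define g2 where "g2 = snd (\<phi> 1)"
  have \<phi>f: "\<phi> t = ((t * g1) mod p, (t * g2) mod p)" if "t \<in> Zp p" for t
    using phi_form[OF p2 \<phi>bij UZ \<phi>hom that] by (simp add: g1_def g2_def)
  have \<phi>Z: "\<phi> t \<in> Zp2 p" if "t \<in> Zp p" for t using \<phi>bij UZ that by (auto simp: bij_betw_def)
  have \<phi>inj: "inj_on \<phi> (Zp p)" using \<phi>bij by (simp add: bij_betw_def)
  have \<phi>img: "\<phi> ` Zp p = U" using \<phi>bij by (simp add: bij_betw_def)
  have finZ2: "finite (Zp2 p)" by (simp add: Zp2_def Zp_def)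
  have finA: "finite A" using AZ finZ2 finite_subset by blast
  define X where "X = A - B"
  define Y where "Y = (\<lambda>i. {t \<in> Zp p. add2 p (x i) (\<phi> t) \<in> X})"
  define Nn where "Nn = (\<lambda>i. N p (x i) U X)"
  define h where "h = (\<lambda>i t. add2 p (x i) (\<phi> t))"
  have hinj: "inj_on (h i) (Zp p)" for i
  proof (rule inj_onI)
    fix t t' assume tt: "t \<in> Zp p" "t' \<in> Zp p" "h i t = h i t'"
    hence "\<phi> t = \<phi> t'" using add2_cancel \<phi>Z unfolding h_def by blast
    thus "t = t'" using \<phi>inj tt by (auto dest: inj_onD)
  qed
  have cardY: "card (Y i) = Nn i" for i
  proof -
    have "h i ` Y i = X \<inter> coset2 p (x i) U"
      unfolding h_def Y_def coset2_def \<phi>img[symmetric] by auto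
    moreover have "inj_on (h i) (Y i)" using hinj by (rule inj_on_subset) (auto simp: Y_def)
    ultimately show ?thesis unfolding Nn_def N_def using card_image by metis
  qed
  define k where "k = (\<lambda>i. Nn i div 2)"
  have YZ: "Y i \<subseteq> {0..<p}" for i by (auto simp: Y_def Zp_def)
  have kle: "k i \<le> card (Y i)" for i by (simp add: cardY k_def)
  have sumk: "(\<Sum>i\<in>I. k i * (card (Y i) - k i)) \<ge> nat p + 1"
  proof -
    have "k i * (card (Y i) - k i) = (Nn i div 2) * ((Nn i + 1) div 2)" for i
      unfolding k_def cardY by (intro arg_cong2[where f="(*)"] refl) presburger
    thus ?thesis using big by (simp add: I_def Nn_def X_def)
  qed
  hence bigk: "nat (p - 1) \<le> (\<Sum>i\<in>I. k i * (card (Y i) - k i))" by linarith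
  define c where "c = ((\<Sum>i\<in>I. int (k i) * fst (x i)) mod p, (\<Sum>i\<in>I. int (k i) * snd (x i)) mod p)"
  have cZ: "c \<in> Zp2 p" using p0 by (simp add: c_def Zp2_def Zp_def)
  have ztZ: "(- \<pi> c) mod p \<in> Zp p" using p0 by (simp add: Zp_def)
  obtain S where SB: "S \<subseteq> B" and Ssum: "(\<Sum>b\<in>S. \<pi> b) mod p = (- \<pi> c) mod p"
    using Bsums ztZ by blast
  have SA: "S \<subseteq> A" using SB BA by auto
  have finS: "finite S" using SA finA finite_subset by blast
  define y where "y = sum2 p S"
  have yZ: "y \<in> Zp2 p" using p0 by (simp add: y_def sum2_Zp2)
  have piy: "\<pi> y = (- \<pi> c) mod p"
    unfolding y_def using pi_sum2[OF p2 piZ pihom finS] SA AZ Ssum by auto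
  define w where "w = add2 p y c"
  have wZ: "w \<in> Zp2 p" using p0 by (simp add: w_def add2_Zp2)
  have piw: "\<pi> w = 0"
  proof -
    have "\<pi> w = ((- \<pi> c) mod p + \<pi> c) mod p" using pihom yZ cZ piy by (simp add: w_def addp_def)
    also have "\<dots> = 0" by (simp add: mod_add_left_eq)
    finally show ?thesis .
  qed
  define u where "u = neg2 p w"
  have uZ: "u \<in> Zp2 p" using p0 by (simp add: u_def neg2_Zp2)
  have uw: "add2 p u w = (0,0)"
    by (simp add: u_def add2_def neg2_def mod_add_left_eq)
  have piu: "\<pi> u = 0"
  proof -
    have "\<pi> (add2 p u w) = (\<pi> u + \<pi> w) mod p" using pihom uZ wZ by (simp add: addp_def)
    hence "0 = \<pi> u mod p" using uw hom_pi_zero[OF p2 piZ pihom] piw by simp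
    moreover have "\<pi> u \<in> Zp p" using piZ uZ by auto
    ultimately show ?thesis by (simp add: Zp_def)
  qed
  have "u \<in> U" using ker uZ piu by auto
  then obtain \<tau>0 where \<tau>0: "\<tau>0 \<in> Zp p" "\<phi> \<tau>0 = u" using \<phi>img by auto
  obtain T where T: "\<forall>i\<in>I. T i \<subseteq> Y i \<and> card (T i) = k i"
    and Tsum: "(\<Sum>i\<in>I. \<Sum>t\<in>T i. t) mod p = \<tau>0 mod p"
    using core[OF pr fI YZ kle bigk, of \<tau>0] by blast
  define W where "W = (\<Union>i\<in>I. h i ` T i)"
  define R where "R = S \<union> W"
  have TZ: "T i \<subseteq> Zp p" if "i \<in> I" for i using T that by (auto simp: Y_def)
  have finT: "finite (T i)" if "i \<in> I" for i using TZ[OF that] finite_subset by (auto simp: Zp_def)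
  have WX: "W \<subseteq> X"
  proof
    fix r assume "r \<in> W"
    then obtain i t where "i \<in> I" "t \<in> T i" "r = h i t" by (auto simp: W_def)
    thus "r \<in> X" using T by (auto simp: Y_def h_def)
  qed
  have RA: "R \<subseteq> A" using SA WX by (auto simp: R_def X_def)
  have finW: "finite W" using fI finT by (auto simp: W_def)
  have SW: "S \<inter> W = {}" using WX SB by (auto simp: X_def)
  have Rne: "R \<noteq> {}"
  proof -
    obtain i where i: "i \<in> I" "k i > 0"
    proof (rule ccontr)
      assume "\<not> thesis"
      hence "\<forall>i\<in>I. k i = 0" using that by auto
      hence "(\<Sum>i\<in>I. k i * (card (Y i) - k i)) = 0" by simp
      thus False using sumk by simp
    qed
    hence "T i \<noteq> {}" using T by auto
    thus ?thesis using i by (auto simp: R_def W_def)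
  qed
  have disj: "h i ` T i \<inter> h j ` T j = {}" if "i \<in> I" "j \<in> I" "i \<noteq> j" for i j
  proof (rule ccontr)
    assume "\<not> ?thesis"
    then obtain r0 where "r0 \<in> h i ` T i" "r0 \<in> h j ` T j" by blast
    then obtain t t' where tt: "t \<in> T i" "t' \<in> T j" "h i t = h j t'" by (metis imageE)
    have tZ: "t \<in> Zp p" "t' \<in> Zp p" using tt TZ that by auto
    define r where "r = h i t"
    have rZ: "r \<in> Zp2 p" using p0 by (simp add: r_def h_def add2_Zp2)
    have "r \<in> coset2 p (x i) U" "r \<in> coset2 p (x j) U"
      using tt tZ \<phi>img unfolding r_def h_def coset2_def by auto (metis image_eqI)
    thus False using xuniq rZ that by (auto simp: I_def)
  qed
  have coord: "(\<Sum>r\<in>R. proj r) mod p = 0"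
    if hp: "\<And>t. t \<in> Zp p \<Longrightarrow> proj (\<phi> t) = (t * gc) mod p"
       "\<And>a b. proj (add2 p a b) = (proj a + proj b) mod p"
       "\<And>a. proj (neg2 p a) = (- proj a) mod p"
       "proj c = (\<Sum>i\<in>I. int (k i) * proj (x i)) mod p"
       "proj y = (\<Sum>b\<in>S. proj b) mod p"
    for proj :: "int \<times> int \<Rightarrow> int" and gc
  proof -
    have e1: "(\<Sum>r\<in>R. proj r) = (\<Sum>r\<in>S. proj r) + (\<Sum>r\<in>W. proj r)"
      unfolding R_def using finS finW SW by (rule sum.union_disjoint)
    have fin_hT: "\<forall>i\<in>I. finite (h i ` T i)" using finT by simp
    have dis_hT: "\<forall>i\<in>I. \<forall>j\<in>I. i \<noteq> j \<longrightarrow> h i ` T i \<inter> h j ` T j = {}"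
      using disj by simp
    have e2: "(\<Sum>r\<in>W. proj r) = (\<Sum>i\<in>I. \<Sum>r\<in>h i ` T i. proj r)"
      unfolding W_def by (rule sum.UNION_disjoint[OF fI fin_hT dis_hT])
    have e3i: "(\<Sum>r\<in>h i ` T i. proj r) = (\<Sum>t\<in>T i. proj (h i t))" if "i \<in> I" for i
    proof -
      have "inj_on (h i) (T i)" using inj_on_subset[OF hinj TZ[OF that]] by simp
      thus ?thesis by (simp add: sum.reindex)
    qed
    have e3: "(\<Sum>i\<in>I. \<Sum>r\<in>h i ` T i. proj r) = (\<Sum>i\<in>I. \<Sum>t\<in>T i. proj (h i t))"
      by (rule sum.cong[OF refl e3i])
    have eq1: "(\<Sum>r\<in>R. proj r) = (\<Sum>r\<in>S. proj r) + (\<Sum>i\<in>I. \<Sum>t\<in>T i. proj (h i t))"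
      by (simp only: e1 e2 e3)
    have "[(\<Sum>i\<in>I. \<Sum>t\<in>T i. proj (h i t)) = (\<Sum>i\<in>I. \<Sum>t\<in>T i. proj (x i) + t * gc)] (mod p)"
    proof (intro cong_sum)
      fix i t assume it: "i \<in> I" "t \<in> T i"
      hence "t \<in> Zp p" using TZ[OF it(1)] it(2) by blast
      hence "proj (h i t) = (proj (x i) + (t * gc) mod p) mod p"
        unfolding h_def hp(2) using hp(1) by simp
      thus "[proj (h i t) = proj (x i) + t * gc] (mod p)"
        by (simp add: cong_def mod_add_right_eq)
    qed
    also have "(\<Sum>i\<in>I. \<Sum>t\<in>T i. proj (x i) + t * gc) =
       (\<Sum>i\<in>I. int (k i) * proj (x i)) + gc * (\<Sum>i\<in>I. \<Sum>t\<in>T i. t)"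
    proof -
      have "(\<Sum>t\<in>T i. proj (x i) + t * gc) = int (k i) * proj (x i) + gc * (\<Sum>t\<in>T i. t)"
        if "i \<in> I" for i
      proof -
        have "card (T i) = k i" using T that by blast
        thus ?thesis by (simp add: sum.distrib sum_distrib_left mult.commute)
      qed
      hence "(\<Sum>i\<in>I. \<Sum>t\<in>T i. proj (x i) + t * gc) =
         (\<Sum>i\<in>I. int (k i) * proj (x i) + gc * (\<Sum>t\<in>T i. t))"
        by (rule sum.cong[OF refl])
      thus ?thesis by (simp add: sum.distrib sum_distrib_left)
    qed
    also have "[\<dots> = proj c + gc * \<tau>0] (mod p)"
    proof (rule cong_add)
      show "[(\<Sum>i\<in>I. int (k i) * proj (x i)) = proj c] (mod p)"
        unfolding hp(4) cong_def by simp
      show "[gc * (\<Sum>i\<in>I. \<Sum>t\<in>T i. t) = gc * \<tau>0] (mod p)"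
        by (rule cong_scalar_left) (simp add: cong_def Tsum)
    qed
    finally have eq2: "[(\<Sum>i\<in>I. \<Sum>t\<in>T i. proj (h i t)) = proj c + gc * \<tau>0] (mod p)" .
    have "proj u = (\<tau>0 * gc) mod p" using hp(1)[OF \<tau>0(1)] \<tau>0 by simp
    moreover have "proj u = (- ((proj y + proj c) mod p)) mod p"
      using hp(2,3) by (simp add: u_def w_def)
    ultimately have "[gc * \<tau>0 = - (proj y + proj c)] (mod p)"
      by (simp add: cong_def mod_minus_eq mult.commute)
    have "[(\<Sum>r\<in>R. proj r) = proj y + (proj c + gc * \<tau>0)] (mod p)"
      unfolding eq1 using eq2 hp(5) by (intro cong_add) (simp_all add: cong_def)
    also have "[proj y + (proj c + gc * \<tau>0) = proj y + (proj c + - (proj y + proj c))] (mod p)"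
      using \<open>[gc * \<tau>0 = _] (mod p)\<close> by (intro cong_add cong_refl)
    finally show ?thesis by (simp add: cong_def)
  qed
  have sfst: "(\<Sum>r\<in>R. fst r) mod p = 0"
    by (rule coord[where gc=g1]) (simp_all add: \<phi>f add2_def neg2_def c_def y_def sum2_def)
  have ssnd: "(\<Sum>r\<in>R. snd r) mod p = 0"
    by (rule coord[where gc=g2]) (simp_all add: \<phi>f add2_def neg2_def c_def y_def sum2_def)
  have "sum2 p R = (0,0)" using sfst ssnd by (simp add: sum2_def)
  thus ?thesis using RA Rne by blast
qed


end
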